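(* Let $k,p,q$ be integers with $q>0$, $\gcd(p,q)=1$ and $kq-p$ even, and let $Q=Q_2(L)$ be the involutory quandle with generators $a,b,c$ and defining relations $$R1: c^{ab}=c,\qquad R2: a^{(ca)^q}=a^{(ba)^{(kq-p)/2}},\qquad R3: b^{(bc)^q}=b^{(ab)^{(kq-p)/2}}.$$ Then the following relations also hold in $Q$: $c^{(ac)^{2q}}=c$; $a^{(ca)^{2q}}=a$; $b^{(cb)^{2q}}=b$; $a^{(ba)^{(kq-p)/2}}=a^{(ac)^q}$; $b^{(ab)^{(kq-p)/2}}=b^{(bc)^q}$; for $0\le i\le q$ and $0\le j\le \vert kq-p\vert/2$: $a^{(ca)^i(ba)^jc}=a^{(ca)^ic(ba)^j}$, $b^{(cb)^i(ab)^jc}=b^{(cb)^ic(ab)^j}$, $a^{(ca)^i(ab)^jabc}=a^{(ca)^{i+1}(ba)^jb}$, $b^{(cb)^i(ba)^jbac}=b^{(cb)^{i+1}(ab)^ja}$; $c^{(ac)^ia}=c^{(ac)^ib}$ for all $i\ge 0$.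
   Context: An involutory quandle is a set with a binary operation $(x,y)\mapsto x^y$ satisfying $x^x=x$, $(x^y)^y=x$ and $(x^y)^z=(x^z)^{(y^z)}$; a presentation denotes the involutory quandle generated by the given generators subject to the given relations and these axioms. Exponents are read left to right: $x^{yz}=(x^y)^z$, and $z^w$ for a word $w$ means successive action by its letters; negative powers are interpreted via $(xy)^{-1}=yx$. This presentation is the involutory quandle of $L=L(k,p/q)\cup C$, the two-bridge link built from a block of $k$ half-twists and a rational $p/q$-tangle together with an unknotted axis $C$, in the case $kq-p$ even. *)

theory Defs
  imports Main
begin

definition inv_quandle :: "'a set \<Rightarrow> ('a \<Rightarrow> 'a \<Rightarrow> 'a) \<Rightarrow> bool" where
  "inv_quandle X op \<longleftrightarrow>
     (\<forall>x\<in>X. \<forall>y\<in>X. op x y \<in> X) \<and>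
     (\<forall>x\<in>X. op x x = x) \<and>
     (\<forall>x\<in>X. \<forall>y\<in>X. op (op x y) y = x) \<and>
     (\<forall>x\<in>X. \<forall>y\<in>X. \<forall>z\<in>X. op (op x y) z = op (op x z) (op y z))"

fun act :: "('a \<Rightarrow> 'a \<Rightarrow> 'a) \<Rightarrow> 'a \<Rightarrow> 'a list \<Rightarrow> 'a" where
  "act op x [] = x"
| "act op x (y # ys) = act op (op x y) ys"

text \<open>Integer power of a word; negative powers use the inverse word
  (w^{-1} = rev w, e.g. (xy)^{-1} = yx).\<close>
definition wpow :: "'a list \<Rightarrow> int \<Rightarrow> 'a list" where
  "wpow w n = (if 0 \<le> n then concat (replicate (nat n) w)
               else concat (replicate (nat (- n)) (rev w)))"

end

theory Submission
  imports Defs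
begin


definition pw :: "'a list \<Rightarrow> nat \<Rightarrow> 'a list" where
  "pw w m = concat (replicate m w)"

lemma act_append[simp]: "act op x (u @ v) = act op (act op x u) v"
  by (induction u arbitrary: x) auto

lemma pw_0[simp]: "pw w 0 = []" by (simp add: pw_def)
lemma pw_Suc: "pw w (Suc m) = w @ pw w m" by (simp add: pw_def)
lemma pw_Suc2: "pw w (Suc m) = pw w m @ w"
  by (induction m) (auto simp: pw_def)
lemma pw_add: "pw w (m + n) = pw w m @ pw w n"
  by (induction m) (auto simp: pw_Suc)
lemma pw_comm: "pw w m @ w = w @ pw w m"
  by (metis pw_Suc pw_Suc2)
lemma rev_pw2: "rev (pw [x, y] m) = pw [y, x] m"
proof (induction m)
  case (Suc m) then show ?case using pw_comm[of "[y,x]" m] by (simp add: pw_Suc)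
qed simp
lemma pw_shift: "pw [x, y] m @ [x] = x # pw [y, x] m"
  by (induction m) (auto simp: pw_Suc)
lemma set_pw: "set (pw w m) \<subseteq> set w"
  by (induction m) (auto simp: pw_Suc)
lemma wpow_nat: "wpow w (int m) = pw w m" by (simp add: wpow_def pw_def)
lemma wpow_neg: "wpow w (- int m) = pw (rev w) m"
  by (cases m) (simp_all add: wpow_def pw_def del: of_nat_Suc)

lemma set_wpow: "set (wpow w M) \<subseteq> set w"
proof -
  have "set (concat (replicate n v)) \<subseteq> set v" for n and v :: "'a list"
    by (induction n) auto
  then show ?thesis unfolding wpow_def by (auto split: if_splits)
qed

lemma int_cases_pm: obtains m where "N = int m" | m where "N = - int m"
  by (metis int_cases2)

locale iq =
  fixes X and op :: "'a \<Rightarrow> 'a \<Rightarrow> 'a"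
  assumes iqd: "inv_quandle X op"
begin

lemma cl[simp]: "x \<in> X \<Longrightarrow> y \<in> X \<Longrightarrow> op x y \<in> X"
  using iqd by (simp add: inv_quandle_def)
lemma inv[simp]: "x \<in> X \<Longrightarrow> y \<in> X \<Longrightarrow> op (op x y) y = x"
  using iqd by (simp add: inv_quandle_def)
lemma idem[simp]: "x \<in> X \<Longrightarrow> op x x = x"
  using iqd by (simp add: inv_quandle_def)
lemma dist: "x \<in> X \<Longrightarrow> y \<in> X \<Longrightarrow> z \<in> X \<Longrightarrow> op (op x y) z = op (op x z) (op y z)"
  using iqd unfolding inv_quandle_def by blast

lemma act_cl[simp]: "x \<in> X \<Longrightarrow> set w \<subseteq> X \<Longrightarrow> act op x w \<in> X"
  by (induction w arbitrary: x) auto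

lemma Slem: "x \<in> X \<Longrightarrow> y \<in> X \<Longrightarrow> set w \<subseteq> X \<Longrightarrow>
   op x (act op y w) = act op x (rev w @ y # w)"
proof (induction w arbitrary: x rule: rev_induct)
  case Nil then show ?case by simp
next
  case (snoc z w)
  have z: "z \<in> X" and w: "set w \<subseteq> X" using snoc by auto
  let ?Y = "act op y w"
  have Y: "?Y \<in> X" using snoc.prems w by simp
  have "op x (act op y (w @ [z])) = op (op (op x z) z) (op ?Y z)" using snoc z by simp
  also have "\<dots> = op (op (op x z) ?Y) z" using dist[of "op x z" ?Y z] snoc.prems z Y by simp
  also have "\<dots> = op (act op (op x z) (rev w @ y # w)) z" using snoc.IH[of "op x z"] snoc.prems z w by simp
  finally show ?case by simp
qed

lemma cancel_pw: "t \<in> X \<Longrightarrow> x \<in> X \<Longrightarrow> y \<in> X \<Longrightarrow>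
   act op (act op t (pw [x, y] m)) (pw [y, x] m) = t"
proof (induction m arbitrary: t)
  case 0 then show ?case by simp
next
  case (Suc m)
  have "act op (act op t (pw [x, y] (Suc m))) (pw [y, x] (Suc m))
     = op (op (act op (act op (op (op t x) y) (pw [x, y] m)) (pw [y, x] m)) y) x"
    by (simp only: pw_Suc[of "[x,y]"] pw_Suc2[of "[y,x]"] act_append act.simps)
  also have "\<dots> = t" using Suc by simp
  finally show ?case .
qed

lemma cancel_wpow: assumes "t \<in> X" "x \<in> X" "y \<in> X" shows
   "act op (act op t (wpow [x, y] N)) (wpow [x, y] (- N)) = t"
proof (cases N rule: int_cases_pm)
  case (1 m) then show ?thesis using assms cancel_pw[of t x y m]
    by (simp add: wpow_nat wpow_neg)
next
  case (2 m) then show ?thesis using assms cancel_pw[of t y x m]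
    by (simp add: wpow_nat wpow_neg del: of_nat_Suc)
qed

lemma flip_pw: "t \<in> X \<Longrightarrow> x \<in> X \<Longrightarrow> y \<in> X \<Longrightarrow>
   act op t (pw [x, y] m @ [y]) = act op t ([y] @ pw [y, x] m)"
proof (induction m arbitrary: t)
  case 0 then show ?case by simp
next
  case (Suc m)
  have "act op t (pw [x, y] (Suc m) @ [y]) = act op (op (op t x) y) (pw [x, y] m @ [y])"
    by (simp add: pw_Suc)
  also have "\<dots> = act op (op (op t x) y) ([y] @ pw [y, x] m)" using Suc by simp
  also have "\<dots> = act op t ([y] @ pw [y, x] (Suc m))"
    using Suc.prems by (simp add: pw_Suc)
  finally show ?case .
qed

lemma flip_wpow: assumes "t \<in> X" "x \<in> X" "y \<in> X" shows
   "act op t (wpow [x, y] N @ [y]) = act op t ([y] @ wpow [x, y] (- N))"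
proof (cases N rule: int_cases_pm)
  case (1 m) then show ?thesis using assms flip_pw[of t x y m]
    by (simp add: wpow_nat wpow_neg)
next
  case (2 m)
  have e: "act op t (pw [y, x] m @ [y]) = act op t ([y] @ pw [x, y] m)"
    by (simp only: pw_shift append_Cons append_Nil)
  have w1: "wpow [x, y] N = pw [y, x] m" using 2 by (simp add: wpow_neg)
  have w2: "wpow [x, y] (- N) = pw [x, y] m" using 2 by (simp add: wpow_nat)
  show ?thesis unfolding w1 w2 by (rule e)
qed

lemma comm_pw: assumes "set w \<subseteq> X" "z \<in> X"
  and h: "\<And>t. t \<in> X \<Longrightarrow> act op t (w @ [z]) = act op t ([z] @ w)"
  shows "t \<in> X \<Longrightarrow> act op t (pw w m @ [z]) = act op t ([z] @ pw w m)"
proof (induction m arbitrary: t)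
  case 0 then show ?case by simp
next
  case (Suc m)
  have s: "set (pw w m) \<subseteq> X" by (rule order_trans[OF set_pw assms(1)])
  have "act op t (pw w (Suc m) @ [z]) = act op (act op t (pw w m)) (w @ [z])"
    by (simp add: pw_Suc2)
  also have "\<dots> = act op (act op t (pw w m)) ([z] @ w)" by (rule h) (use Suc.prems s in simp)
  also have "\<dots> = act op (act op t (pw w m @ [z])) w" by simp
  also have "\<dots> = act op (act op t ([z] @ pw w m)) w" by (simp only: Suc.IH[OF Suc.prems])
  finally show ?case by (simp add: pw_Suc2)
qed

end

lemma rev_wpow2: "rev (wpow [x, y] M) = wpow [x, y] (- M)"
proof (cases M rule: int_cases_pm)
  case (1 m) then show ?thesis by (simp add: wpow_nat wpow_neg rev_pw2)
next
  case (2 m) then show ?thesis by (simp add: wpow_nat wpow_neg rev_pw2 del: of_nat_Suc)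
qed

theorem lemma4p4:
  fixes k p q :: int and X :: "'a set" and op :: "'a \<Rightarrow> 'a \<Rightarrow> 'a" and a b c :: 'a
  assumes "q > 0" and "gcd p q = 1" and "even (k * q - p)"
    and "inv_quandle X op" and "a \<in> X" and "b \<in> X" and "c \<in> X"
    and R1: "act op c [a, b] = c"
    and R2: "act op a (wpow [c, a] q) = act op a (wpow [b, a] ((k * q - p) div 2))"
    and R3: "act op b (wpow [b, c] q) = act op b (wpow [a, b] ((k * q - p) div 2))"
  shows "act op c (wpow [a, c] (2 * q)) = c
    \<and> act op a (wpow [c, a] (2 * q)) = a
    \<and> act op b (wpow [c, b] (2 * q)) = b
    \<and> act op a (wpow [b, a] ((k * q - p) div 2)) = act op a (wpow [a, c] q)
    \<and> act op b (wpow [a, b] ((k * q - p) div 2)) = act op b (wpow [b, c] q)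
    \<and> (\<forall>i j. 0 \<le> i \<and> i \<le> q \<and> 0 \<le> j \<and> j \<le> \<bar>k * q - p\<bar> div 2 \<longrightarrow>
         act op a (wpow [c, a] i @ wpow [b, a] j @ [c]) = act op a (wpow [c, a] i @ [c] @ wpow [b, a] j)
       \<and> act op b (wpow [c, b] i @ wpow [a, b] j @ [c]) = act op b (wpow [c, b] i @ [c] @ wpow [a, b] j)
       \<and> act op a (wpow [c, a] i @ wpow [a, b] j @ [a, b, c]) = act op a (wpow [c, a] (i + 1) @ wpow [b, a] j @ [b])
       \<and> act op b (wpow [c, b] i @ wpow [b, a] j @ [b, a, c]) = act op b (wpow [c, b] (i + 1) @ wpow [a, b] j @ [a]))
    \<and> (\<forall>i::nat. act op c (wpow [a, c] (int i) @ [a]) = act op c (wpow [a, c] (int i) @ [b]))"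
proof -
  interpret iq X op by unfold_locales (rule assms(4))
  note mem = \<open>a \<in> X\<close> \<open>b \<in> X\<close> \<open>c \<in> X\<close>
  define N where "N = (k * q - p) div 2"
  define Q where "Q = nat q"
  have qQ: "q = int Q" using \<open>q > 0\<close> by (simp add: Q_def)
  have oddq: "odd q"
  proof
    assume "even q"
    then have "even (k * q)" by simp
    then have "even (k * q - (k * q - p))" using \<open>even (k * q - p)\<close> by (rule dvd_diff)
    then have "even p" by simp
    then have "2 dvd gcd p q" using \<open>even q\<close> by simp
    then show False using \<open>gcd p q = 1\<close> by simp
  qed
  have oddQ: "odd Q" using oddq qQ by simp
  have cSa: "\<And>t. t \<in> X \<Longrightarrow> op t c = act op t [b, a, c, a, b]"
    using Slem[of _ c "[a, b]"] R1 mem by simp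
  have K1: "act op t ([a, b] @ [c]) = act op t ([c] @ [a, b])" if t: "t \<in> X" for t
  proof -
    have "act op t ([a, b] @ [c]) = act op (act op t [a, b]) [b, a, c, a, b]"
      using cSa[of "act op t [a, b]"] t mem by simp
    also have "\<dots> = act op t ([c] @ [a, b])" using t mem by simp
    finally show ?thesis .
  qed
  have K2: "act op t ([b, a] @ [c]) = act op t ([c] @ [b, a])" if t: "t \<in> X" for t
  proof -
    have "act op t ([c] @ [b, a]) = act op (act op t [b, a, c, a, b]) [b, a]"
      using cSa[of t] t mem by simp
    also have "\<dots> = act op t ([b, a] @ [c])" using t mem by simp
    finally show ?thesis by simp
  qed
  have commN: "\<And>t M x y. t \<in> X \<Longrightarrow> {x, y} = {a, b} \<Longrightarrow>
      act op t (wpow [x, y] M @ [c]) = act op t ([c] @ wpow [x, y] M)"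
  proof -
    fix t M x y assume t: "t \<in> X" and xy: "{x, y} = {a, b}"
    have h1: "act op t (pw [a, b] m @ [c]) = act op t ([c] @ pw [a, b] m)" for m
      using comm_pw[of "[a,b]" c, OF _ _ K1 t] mem by simp
    have h2: "act op t (pw [b, a] m @ [c]) = act op t ([c] @ pw [b, a] m)" for m
      using comm_pw[of "[b,a]" c, OF _ _ K2 t] mem by simp
    show "act op t (wpow [x, y] M @ [c]) = act op t ([c] @ wpow [x, y] M)"
      using xy h1 h2 by (cases M rule: int_cases_pm)
        (auto simp: wpow_nat wpow_neg doubleton_eq_iff simp del: act_append)
  qed

  have cab: "act op c [a, b] = c" by (rule R1)
  have cba: "act op c [b, a] = c"
  proof -
    have "op (op c a) b = c" using R1 by simp
    then have e: "op c a = op c b" using mem by (metis inv cl)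
    have "act op c [b, a] = op (op c a) a" using e by simp
    also have "\<dots> = c" using mem by simp
    finally show ?thesis .
  qed
  have fixc_pw: "\<And>m x y. act op c [x, y] = c \<Longrightarrow> act op c (pw [x, y] m) = c"
  proof -
    fix m x y assume h: "act op c [x, y] = c"
    show "act op c (pw [x, y] m) = c"
    proof (induction m)
      case (Suc m)
      have "act op c (pw [x, y] (Suc m)) = act op (act op c [x, y]) (pw [x, y] m)"
        by (simp only: pw_Suc act_append)
      also have "\<dots> = act op c (pw [x, y] m)" by (simp only: h)
      also have "\<dots> = c" by (rule Suc.IH)
      finally show ?case .
    qed simp
  qed
  have fixc: "\<And>M. act op c (wpow [b, a] M) = c"
  proof -
    fix M show "act op c (wpow [b, a] M) = c"
      using fixc_pw[OF cab] fixc_pw[OF cba]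
      by (cases M rule: int_cases_pm) (simp_all add: wpow_nat wpow_neg del: act.simps of_nat_Suc)
  qed
  have step: "\<And>t M x y. t \<in> X \<Longrightarrow> {x, y} = {a, b} \<Longrightarrow>
      act op t (wpow [x, y] M @ [c, y]) = act op t ([c, y] @ wpow [x, y] (- M))"
  proof -
    fix t M x y assume t: "t \<in> X" and xy: "{x, y} = {a, b}"
    have x: "x \<in> X" and y: "y \<in> X" using xy mem by (auto simp: doubleton_eq_iff)
    have sW: "set (wpow [x, y] M) \<subseteq> X"
      using x y set_wpow[of "[x, y]" M] by auto
    have "act op t (wpow [x, y] M @ [c, y]) = act op (act op t (wpow [x, y] M @ [c])) [y]" by simp
    also have "\<dots> = act op (act op t ([c] @ wpow [x, y] M)) [y]" using commN[OF t xy] by simp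
    also have "\<dots> = act op (op t c) (wpow [x, y] M @ [y])" by simp
    also have "\<dots> = act op (op t c) ([y] @ wpow [x, y] (- M))"
      using flip_wpow[of "op t c" x y M] t x y mem by simp
    finally show "act op t (wpow [x, y] M @ [c, y]) = act op t ([c, y] @ wpow [x, y] (- M))" by simp
  qed
  have iter: "\<And>m t M x y. t \<in> X \<Longrightarrow> {x, y} = {a, b} \<Longrightarrow>
      act op t (wpow [x, y] M @ pw [c, y] m) = act op t (pw [c, y] m @ wpow [x, y] (if even m then M else - M))"
  proof -
    fix m t M x y assume xy: "{x, y} = {a, b}"
    have y: "y \<in> X" using xy mem by (auto simp: doubleton_eq_iff)
    show "t \<in> X \<Longrightarrow> act op t (wpow [x, y] M @ pw [c, y] m) = act op t (pw [c, y] m @ wpow [x, y] (if even m then M else - M))"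
    proof (induction m arbitrary: t M)
      case 0 then show ?case by simp
    next
      case (Suc m)
      have "act op t (wpow [x, y] M @ pw [c, y] (Suc m)) = act op (act op t (wpow [x, y] M @ [c, y])) (pw [c, y] m)"
        by (simp only: pw_Suc act_append)
      also have "\<dots> = act op (act op t ([c, y] @ wpow [x, y] (- M))) (pw [c, y] m)"
        using step[OF Suc.prems xy] by simp
      also have "\<dots> = act op (act op t [c, y]) (wpow [x, y] (- M) @ pw [c, y] m)" by simp
      also have "\<dots> = act op (act op t [c, y]) (pw [c, y] m @ wpow [x, y] (if even m then - M else - (- M)))"
        using Suc.IH[of "act op t [c, y]" "- M"] Suc.prems y mem by simp
      also have "\<dots> = act op t (pw [c, y] (Suc m) @ wpow [x, y] (if even (Suc m) then M else - M))"
        by (simp only: pw_Suc act_append append_assoc) simp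
      finally show ?case .
    qed
  qed
  have ab: "{a, b} = {a, b}" and ba: "{b, a} = {a, b}" by auto
  have twoq: "2 * q = int (Q + Q)" using qQ by simp
  have A: "act op a (pw [c, a] Q) = act op a (wpow [b, a] N)" using R2 qQ by (simp add: wpow_nat N_def)
  have G2: "act op a (pw [c, a] (Q + Q)) = a"
  proof -
    have "act op a (pw [c, a] (Q + Q)) = act op (act op a (wpow [b, a] N)) (pw [c, a] Q)"
      using A by (simp add: pw_add)
    also have "\<dots> = act op a (wpow [b, a] N @ pw [c, a] Q)" by simp
    also have "\<dots> = act op a (pw [c, a] Q @ wpow [b, a] (- N))" using iter[where m=Q and t=a and M=N and x=b and y=a] ba mem oddQ by simp
    also have "\<dots> = act op (act op a (wpow [b, a] N)) (wpow [b, a] (- N))" using A by simp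
    also have "\<dots> = a" using cancel_wpow[of a b a N] mem by simp
    finally show ?thesis .
  qed
  have B0: "act op b (pw [b, c] Q) = act op b (wpow [a, b] N)" using R3 qQ by (simp add: wpow_nat N_def)
  have B1: "act op b (pw [c, b] Q) = act op b (wpow [a, b] (- N))"
  proof -
    have "act op b (pw [c, b] Q) = act op b ([b] @ pw [c, b] Q)" using mem by simp
    also have "\<dots> = act op b (pw [b, c] Q @ [b])" by (simp only: pw_shift append_Cons append_Nil)
    also have "\<dots> = act op b (wpow [a, b] N @ [b])" using B0 by simp
    also have "\<dots> = act op b ([b] @ wpow [a, b] (- N))" using flip_wpow mem by simp
    also have "\<dots> = act op b (wpow [a, b] (- N))" using mem by simp
    finally show ?thesis .
  qed
  have G3: "act op b (pw [c, b] (Q + Q)) = b"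
  proof -
    have "act op b (pw [c, b] (Q + Q)) = act op (act op b (wpow [a, b] (- N))) (pw [c, b] Q)"
      using B1 by (simp add: pw_add)
    also have "\<dots> = act op b (wpow [a, b] (- N) @ pw [c, b] Q)" by simp
    also have "\<dots> = act op b (pw [c, b] Q @ wpow [a, b] (- (- N)))" using iter[where m=Q and t=b and M="- N" and x=a and y=b] ab mem oddQ by simp
    also have "\<dots> = act op (act op b (wpow [a, b] (- N))) (wpow [a, b] (- (- N)))" using B1 by simp
    also have "\<dots> = b" using cancel_wpow[of b a b "- N"] mem by simp
    finally show ?thesis .
  qed
  have sPhi: "set (wpow [b, a] M) \<subseteq> X" for M
    using mem set_wpow[of "[b, a]" M] by auto
  have sPsi: "set (pw [x, y] m) \<subseteq> X" if "x \<in> X" "y \<in> X" for x y m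
    using that set_pw[of "[x,y]" m] by auto
  have S1: "op t (act op a (pw [c, a] Q)) = act op (op t a) (pw [c, a] Q @ pw [c, a] Q)" if t: "t \<in> X" for t
  proof -
    have "op t (act op a (pw [c, a] Q)) = act op t (rev (pw [c, a] Q) @ a # pw [c, a] Q)"
      using Slem[OF t _ sPsi] mem by simp
    also have "\<dots> = act op t ((pw [a, c] Q @ [a]) @ pw [c, a] Q)" by (simp add: rev_pw2 del: act_append)
    also have "\<dots> = act op t (a # pw [c, a] Q @ pw [c, a] Q)" by (simp only: pw_shift append_Cons)
    finally show ?thesis by simp
  qed
  have S2: "op t (act op a (wpow [b, a] N)) = act op (op t a) (wpow [b, a] N @ wpow [b, a] N)" if t: "t \<in> X" for t
  proof -
    have "op t (act op a (wpow [b, a] N)) = act op t (rev (wpow [b, a] N) @ a # wpow [b, a] N)"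
      using Slem[OF t _ sPhi] mem by simp
    also have "\<dots> = act op (act op t (wpow [b, a] (- N) @ [a])) (wpow [b, a] N)" by (simp add: rev_wpow2)
    also have "\<dots> = act op (act op t ([a] @ wpow [b, a] (- (- N)))) (wpow [b, a] N)"
      using flip_wpow[OF t, of b a "- N"] mem by simp
    finally show ?thesis by simp
  qed
  have C0: "act op c (pw [c, a] (Q + Q)) = c"
  proof -
    have "act op c (pw [c, a] (Q + Q)) = act op (op (op c a) a) (pw [c, a] Q @ pw [c, a] Q)"
      using mem by (simp add: pw_add del: act_append)
    also have "\<dots> = op (op c a) (act op a (pw [c, a] Q))" using S1[of "op c a"] mem by simp
    also have "\<dots> = op (op c a) (act op a (wpow [b, a] N))" using A by simp
    also have "\<dots> = act op c (wpow [b, a] N @ wpow [b, a] N)" using S2[of "op c a"] mem by simp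
    also have "\<dots> = c" using fixc by simp
    finally show ?thesis .
  qed
  have G1: "act op c (pw [a, c] (Q + Q)) = c"
  proof -
    have "act op c (pw [a, c] (Q + Q)) = act op (act op c (pw [c, a] (Q + Q))) (pw [a, c] (Q + Q))"
      using C0 by simp
    also have "\<dots> = c" by (rule cancel_pw) (use mem in auto)
    finally show ?thesis .
  qed
  have G4: "act op a (wpow [b, a] N) = act op a (pw [a, c] Q)"
  proof -
    have "act op a (pw [a, c] Q) = act op (act op (act op a (pw [c, a] Q)) (pw [c, a] Q)) (pw [a, c] Q)"
      using G2 by (simp add: pw_add)
    also have "\<dots> = act op a (pw [c, a] Q)" by (rule cancel_pw) (use mem sPsi in auto)
    finally show ?thesis using A by simp
  qed
  have cp: "\<And>t m x y. t \<in> X \<Longrightarrow> {x, y} = {a, b} \<Longrightarrow>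
      act op t (pw [x, y] m @ [c]) = act op t ([c] @ pw [x, y] m)"
  proof -
    fix t m x y assume "t \<in> X" "{x, y} = {a, b}"
    then show "act op t (pw [x, y] m @ [c]) = act op t ([c] @ pw [x, y] m)"
      using commN[of t x y "int m"] by (simp only: wpow_nat)
  qed
  have G6: "act op a (wpow [c, a] i @ wpow [b, a] j @ [c]) = act op a (wpow [c, a] i @ [c] @ wpow [b, a] j)
       \<and> act op b (wpow [c, b] i @ wpow [a, b] j @ [c]) = act op b (wpow [c, b] i @ [c] @ wpow [a, b] j)
       \<and> act op a (wpow [c, a] i @ wpow [a, b] j @ [a, b, c]) = act op a (wpow [c, a] (i + 1) @ wpow [b, a] j @ [b])
       \<and> act op b (wpow [c, b] i @ wpow [b, a] j @ [b, a, c]) = act op b (wpow [c, b] (i + 1) @ wpow [a, b] j @ [a])"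
    if ij: "0 \<le> i" "0 \<le> j" for i j
  proof -
    obtain I J where I: "i = int I" and J: "j = int J" using ij by (metis nonneg_eq_int)
    have I1: "i + 1 = int (Suc I)" using I by simp
    have Pa: "act op a (pw [c, a] I) \<in> X" and Pb: "act op b (pw [c, b] I) \<in> X"
      using mem sPsi by auto
    have e1: "act op a (pw [c, a] I @ pw [b, a] J @ [c]) = act op a (pw [c, a] I @ [c] @ pw [b, a] J)"
      using cp[OF Pa ba] by simp
    have e2: "act op b (pw [c, b] I @ pw [a, b] J @ [c]) = act op b (pw [c, b] I @ [c] @ pw [a, b] J)"
      using cp[OF Pb ab] by simp
    have l3: "pw [c, a] (Suc I) @ pw [b, a] J @ [b] = pw [c, a] I @ [c] @ pw [a, b] (Suc J)"
    proof -
      have "pw [c, a] (Suc I) @ pw [b, a] J @ [b] = pw [c, a] I @ [c] @ (a # pw [b, a] J) @ [b]"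
        by (simp add: pw_Suc2)
      also have "\<dots> = pw [c, a] I @ [c] @ (pw [a, b] J @ [a]) @ [b]" by (simp only: pw_shift)
      finally show ?thesis by (simp add: pw_Suc2)
    qed
    have e3: "act op a (pw [c, a] I @ pw [a, b] J @ [a, b, c]) = act op a (pw [c, a] (Suc I) @ pw [b, a] J @ [b])"
      unfolding l3 using cp[OF Pa ab, of "Suc J"] by (simp add: pw_Suc2)
    have l4: "pw [c, b] (Suc I) @ pw [a, b] J @ [a] = pw [c, b] I @ [c] @ pw [b, a] (Suc J)"
    proof -
      have "pw [c, b] (Suc I) @ pw [a, b] J @ [a] = pw [c, b] I @ [c] @ (b # pw [a, b] J) @ [a]"
        by (simp add: pw_Suc2)
      also have "\<dots> = pw [c, b] I @ [c] @ (pw [b, a] J @ [b]) @ [a]" by (simp only: pw_shift)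
      finally show ?thesis by (simp add: pw_Suc2)
    qed
    have e4: "act op b (pw [c, b] I @ pw [b, a] J @ [b, a, c]) = act op b (pw [c, b] (Suc I) @ pw [a, b] J @ [a])"
      unfolding l4 using cp[OF Pb ba, of "Suc J"] by (simp add: pw_Suc2)
    show ?thesis using e1 e2 e3 e4 unfolding I1 unfolding I J wpow_nat by blast
  qed
  have G7: "act op c (pw [a, c] i @ [a]) = act op c (pw [a, c] i @ [b])" for i
  proof (induction i)
    case 0
    have "op (op c a) b = c" using R1 by simp
    then have "op c a = op c b" using mem by (metis inv cl)
    then show ?case by simp
  next
    case (Suc i)
    define T where "T = act op c (pw [a, c] i)"
    have T: "T \<in> X" unfolding T_def using mem sPsi by auto
    have IH: "op T a = op T b" using Suc.IH unfolding T_def by simp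
    have "act op T [a, c, a, b] = act op (op T a) ([c] @ [a, b])" by simp
    also have "\<dots> = act op (op T a) ([a, b] @ [c])" using K1[of "op T a"] T mem by simp
    also have "\<dots> = op (op T b) c" using T mem by simp
    also have "\<dots> = act op T [a, c]" using IH by simp
    finally have h: "act op T [a, c, a, b] = act op T [a, c]" .
    have "act op T [a, c, a] = op (op (act op T [a, c, a]) b) b"
      using T mem by simp
    also have "\<dots> = op (act op T [a, c, a, b]) b" by simp
    also have "\<dots> = act op T [a, c, b]" using h by simp
    finally show ?case unfolding T_def by (simp add: pw_Suc2)
  qed
  have f1: "act op c (wpow [a, c] (2 * q)) = c" unfolding twoq wpow_nat by (rule G1)
  have f2: "act op a (wpow [c, a] (2 * q)) = a" unfolding twoq wpow_nat by (rule G2)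
  have f3: "act op b (wpow [c, b] (2 * q)) = b" unfolding twoq wpow_nat by (rule G3)
  have f4: "act op a (wpow [b, a] ((k * q - p) div 2)) = act op a (wpow [a, c] q)"
    using G4 unfolding qQ wpow_nat N_def .
  have f5: "act op b (wpow [a, b] ((k * q - p) div 2)) = act op b (wpow [b, c] q)"
    using R3 by simp
  have f6: "\<forall>i j. 0 \<le> i \<and> i \<le> q \<and> 0 \<le> j \<and> j \<le> \<bar>k * q - p\<bar> div 2 \<longrightarrow>
         act op a (wpow [c, a] i @ wpow [b, a] j @ [c]) = act op a (wpow [c, a] i @ [c] @ wpow [b, a] j)
       \<and> act op b (wpow [c, b] i @ wpow [a, b] j @ [c]) = act op b (wpow [c, b] i @ [c] @ wpow [a, b] j)
       \<and> act op a (wpow [c, a] i @ wpow [a, b] j @ [a, b, c]) = act op a (wpow [c, a] (i + 1) @ wpow [b, a] j @ [b])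
       \<and> act op b (wpow [c, b] i @ wpow [b, a] j @ [b, a, c]) = act op b (wpow [c, b] (i + 1) @ wpow [a, b] j @ [a])"
  proof (intro allI impI)
    fix i j :: int assume "0 \<le> i \<and> i \<le> q \<and> 0 \<le> j \<and> j \<le> \<bar>k * q - p\<bar> div 2"
    then have "0 \<le> i" "0 \<le> j" by auto
    then show "act op a (wpow [c, a] i @ wpow [b, a] j @ [c]) = act op a (wpow [c, a] i @ [c] @ wpow [b, a] j)
       \<and> act op b (wpow [c, b] i @ wpow [a, b] j @ [c]) = act op b (wpow [c, b] i @ [c] @ wpow [a, b] j)
       \<and> act op a (wpow [c, a] i @ wpow [a, b] j @ [a, b, c]) = act op a (wpow [c, a] (i + 1) @ wpow [b, a] j @ [b])
       \<and> act op b (wpow [c, b] i @ wpow [b, a] j @ [b, a, c]) = act op b (wpow [c, b] (i + 1) @ wpow [a, b] j @ [a])"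
      by (rule G6)
  qed
  have f7: "\<forall>i::nat. act op c (wpow [a, c] (int i) @ [a]) = act op c (wpow [a, c] (int i) @ [b])"
    unfolding wpow_nat using G7 by blast
  show ?thesis using f1 f2 f3 f4 f5 f6 f7 by (intro conjI)
qed

end
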